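(* Let $d\ge3$, $\alpha<2$ and $q>\frac{d-\alpha}{d-2}$. Then there exists a positive function $u$ on $\mathbb Z^d$ satisfying $\Delta u(x)+(1+|x|)^{-\alpha}u(x)^q\le0$ for all $x\in\mathbb Z^d$.
   Context: $\mathbb Z^d$ is the lattice graph with $\mu_{xy}=1$ if $\|x-y\|_1=1$ and $\mu_{xy}=0$ otherwise, so $\mu(x)=2d$ and $\Delta u(x)=\frac1{2d}\sum_{y:\|y-x\|_1=1}(u(y)-u(x))$. $|x|$ is the Euclidean norm. *)

theory Defs
  imports "HOL-Analysis.Analysis"
begin

text \<open>The lattice Z^d is represented by int ^ 'd for a finite index type 'd, d = CARD('d).\<close>

definition l1dist :: "int ^ 'd \<Rightarrow> int ^ 'd \<Rightarrow> int" where
  "l1dist x y = (\<Sum>i\<in>UNIV. \<bar>x $ i - y $ i\<bar>)"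

definition lattice_nbrs :: "int ^ 'd \<Rightarrow> (int ^ 'd) set" where
  "lattice_nbrs x = {y. l1dist x y = 1}"

text \<open>Normalized graph Laplacian on Z^d: mu(x) = 2d.\<close>
definition lattice_laplacian :: "(int ^ 'd \<Rightarrow> real) \<Rightarrow> int ^ 'd \<Rightarrow> real" where
  "lattice_laplacian u x =
     (1 / (2 * real CARD('d))) * (\<Sum>y\<in>lattice_nbrs x. u y - u x)"

definition lattice_norm :: "int ^ 'd \<Rightarrow> real" where
  "lattice_norm x = sqrt (\<Sum>i\<in>UNIV. (real_of_int (x $ i))\<^sup>2)"

end

theory Submission
  imports Defs "HOL-Real_Asymp.Real_Asymp"
begin

lemma phi_limit:
  "((\<lambda>r::real. ((1+r) powr (-g) + (1-r) powr (-g) - 2)/r^2) \<longlongrightarrow> g*(g+1)) (at 0)"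
  by (real_asymp simp add: algebra_simps)

lemma phi_bound:
  fixes g K :: real
  assumes g: "g > 0" and K: "K > 1"
  shows "\<exists>\<rho>>0. \<rho> \<le> 1/2 \<and> (\<forall>r. r^2 < \<rho>^2 \<longrightarrow>
           (1+r) powr (-g) + (1-r) powr (-g) - 2 \<le> K*g*(g+1)*r^2)"
proof -
  have "g*(g+1) < K*(g*(g+1))" using g K by simp
  from order_tendstoD(2)[OF phi_limit this]
  have "eventually (\<lambda>r. ((1+r) powr (-g) + (1-r) powr (-g) - 2)/r^2 < K*(g*(g+1))) (at 0)" .
  then obtain \<rho> where \<rho>: "\<rho> > 0" and P: "\<And>r. r \<noteq> 0 \<Longrightarrow> dist r 0 < \<rho> \<Longrightarrow>
      ((1+r) powr (-g) + (1-r) powr (-g) - 2)/r^2 < K*(g*(g+1))"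
    unfolding eventually_at by blast
  show ?thesis
  proof (intro exI[of _ "min \<rho> (1/2)"] conjI allI impI)
    fix r :: real assume r: "r^2 < (min \<rho> (1/2))^2"
    show "(1+r) powr (-g) + (1-r) powr (-g) - 2 \<le> K*g*(g+1)*r^2"
    proof (cases "r = 0")
      case True then show ?thesis by simp
    next
      case False
      have m0: "min \<rho> (1/2) \<ge> 0" using \<rho> by simp
      have "\<bar>r\<bar>^2 < (min \<rho> (1/2))^2" using r by simp
      then have "\<bar>r\<bar> < min \<rho> (1/2)" using power_less_imp_less_base[OF _ m0] by blast
      then have "dist r 0 < \<rho>" by simp
      from P[OF False this] have "((1+r) powr (-g) + (1-r) powr (-g) - 2) < K*(g*(g+1)) * r^2"
        using False by (simp add: divide_less_eq)
      then show ?thesis by (simp add: mult.assoc)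
    qed
  qed (use \<rho> in auto)
qed

lemma step_bound:
  fixes g K \<rho> a t :: real
  assumes g: "g > 0" and \<rho>: "\<rho> > 0" "\<rho> \<le> 1/2"
    and P: "\<forall>r. r^2 < \<rho>^2 \<longrightarrow> (1+r) powr (-g) + (1-r) powr (-g) - 2 \<le> K*g*(g+1)*r^2"
    and a: "a > 0" and t: "t^2 < \<rho>^2 * a^2"
  shows "(a+t) powr (-g) + (a-t) powr (-g) - 2 * a powr (-g) \<le> K*g*(g+1)*t^2 * a powr (-g-2)"
proof -
  define r where "r = t / a"
  have r2: "r^2 < \<rho>^2" using t a by (simp add: r_def power_divide divide_less_eq mult.commute)
  have "\<rho>^2 \<le> 1" using \<rho> by (simp add: power_le_one)
  then have "r^2 < 1" using r2 by linarith
  then have "\<bar>r\<bar> < 1" by (simp add: abs_square_less_1)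
  then have p1: "1 + r > 0" and p2: "1 - r > 0" by auto
  have e1: "a + t = a * (1+r)" and e2: "a - t = a * (1-r)" using a by (simp_all add: r_def field_simps)
  have "(a+t) powr (-g) + (a-t) powr (-g) - 2 * a powr (-g) = a powr (-g) * ((1+r) powr (-g) + (1-r) powr (-g) - 2)"
  proof -
    have "(a * (1+r)) powr (-g) = a powr (-g) * (1+r) powr (-g)" using powr_mult[of a "1+r" "-g"] a p1 by linarith
    moreover have "(a * (1-r)) powr (-g) = a powr (-g) * (1-r) powr (-g)" using powr_mult[of a "1-r" "-g"] a p2 by linarith
    ultimately show ?thesis unfolding e1 e2 by (simp add: algebra_simps)
  qed
  also have "\<dots> \<le> a powr (-g) * (K*g*(g+1)*r^2)"
    using P r2 a by (intro mult_left_mono) auto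
  also have "\<dots> = K*g*(g+1)*t^2 * (a powr (-g) / a^2)"
    using a by (simp add: r_def power_divide)
  also have "a powr (-g) / a^2 = a powr (-g-2)"
    proof -
    have "a powr (-g-2) = a powr (-g) / a powr 2" using powr_diff[of a "-g" 2] by simp
    moreover have "a powr 2 = a^2" using a powr_realpow[of a 2] by simp
    ultimately show ?thesis by simp
  qed
  finally show ?thesis .
qed

lemma convex_bound:
  fixes g a :: real
  assumes g: "g > 0" and a: "a > 1"
  shows "a powr (-g) + g * a powr (-g-1) \<le> (a - 1) powr (-g)"
proof -
  define u where "u = 1/a"
  have u: "0 < u" "u < 1" using a by (auto simp: u_def)
  have "ln (1-u) \<le> -u" using ln_le_minus_one[of "1-u"] u by simp
  then have "g*u \<le> g * (- ln (1-u))" using g by (intro mult_left_mono) auto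
  then have "g*u \<le> -g * ln (1-u)" by simp
  then have "1 + g*u \<le> exp (-g * ln (1-u))"
    by (meson exp_ge_add_one_self exp_le_cancel_iff order_trans)
  also have "\<dots> = (1-u) powr (-g)" using u by (simp add: powr_def)
  finally have B: "1 + g*u \<le> (1-u) powr (-g)" .
  have e: "a - 1 = a * (1-u)" using a by (simp add: u_def field_simps)
  have "(a-1) powr (-g) = a powr (-g) * (1-u) powr (-g)" unfolding e using a u by (simp add: powr_mult)
  also have "\<dots> \<ge> a powr (-g) * (1 + g*u)" using B a by (intro mult_left_mono) auto
  finally have "a powr (-g) * (1 + g*u) \<le> (a-1) powr (-g)" .
  moreover have "a powr (-g) * (1 + g*u) = a powr (-g) + g * a powr (-g-1)"
    using a by (simp add: u_def algebra_simps powr_diff powr_minus_divide divide_simps)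
  ultimately show ?thesis by simp
qed

definition ev :: "'d::finite \<Rightarrow> int ^ 'd" where
  "ev i = (\<chi> j. if j = i then 1 else 0)"

definition ssq :: "int ^ 'd::finite \<Rightarrow> real" where
  "ssq x = (\<Sum>j\<in>UNIV. (real_of_int (x $ j))^2)"

lemma sum_one_unique:
  fixes f :: "'d::finite \<Rightarrow> int"
  assumes nn: "\<forall>i. f i \<ge> 0" and s: "sum f UNIV = 1"
  shows "\<exists>i. f i = 1 \<and> (\<forall>j. j \<noteq> i \<longrightarrow> f j = 0)"
proof -
  have "\<exists>i. f i \<noteq> 0"
  proof (rule ccontr)
    assume "\<not> ?thesis" then have "sum f UNIV = 0" by simp
    with s show False by simp
  qed
  then obtain i where i: "f i \<noteq> 0" by blast
  have split: "sum f UNIV = f i + sum f (UNIV - {i})"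
    by (simp add: sum.remove)
  have rest: "sum f (UNIV - {i}) \<ge> 0" using nn by (simp add: sum_nonneg)
  have fi: "f i = 1" using i nn[rule_format, of i] split rest s by linarith
  then have "sum f (UNIV - {i}) = 0" using split s by simp
  then have "\<forall>j\<in>UNIV - {i}. f j = 0" using nn by (subst (asm) sum_nonneg_eq_0_iff) auto
  with fi show ?thesis by auto
qed

lemma nbrs_iff: "y \<in> lattice_nbrs x \<longleftrightarrow> (\<exists>i. y = x + ev i \<or> y = x - ev i)"
proof
  assume "y \<in> lattice_nbrs x"
  then have "(\<Sum>i\<in>UNIV. \<bar>x $ i - y $ i\<bar>) = 1" by (simp add: lattice_nbrs_def l1dist_def)
  from sum_one_unique[OF _ this] obtain i where
    i: "\<bar>x $ i - y $ i\<bar> = 1" and o: "\<forall>j. j \<noteq> i \<longrightarrow> \<bar>x $ j - y $ j\<bar> = 0" by auto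
  show "\<exists>i. y = x + ev i \<or> y = x - ev i"
  proof (cases "y $ i = x $ i + 1")
    case True
    then have "y = x + ev i" using o by (auto simp: vec_eq_iff ev_def)
    then show ?thesis by blast
  next
    case False
    then have "y $ i = x $ i - 1" using i by linarith
    then have "y = x - ev i" using o by (auto simp: vec_eq_iff ev_def)
    then show ?thesis by blast
  qed
next
  assume "\<exists>i. y = x + ev i \<or> y = x - ev i"
  then obtain i where "y = x + ev i \<or> y = x - ev i" by blast
  then have "\<forall>j. \<bar>x $ j - y $ j\<bar> = (if j = i then 1 else 0)" by (auto simp: ev_def)
  then show "y \<in> lattice_nbrs x" by (simp add: lattice_nbrs_def l1dist_def)
qed

lemma nbrs_eq: "lattice_nbrs x = range (\<lambda>i. x + ev i) \<union> range (\<lambda>i. x - ev i)"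
  using nbrs_iff by blast

lemma sum_nbrs:
  fixes F :: "int ^ 'd::finite \<Rightarrow> real"
  shows "(\<Sum>y\<in>lattice_nbrs x. F y) = (\<Sum>i\<in>UNIV. F (x + ev i) + F (x - ev i))"
proof -
  have inj1: "inj (\<lambda>i. x + ev i)"
    by (rule injI) (auto simp: vec_eq_iff ev_def split: if_splits)
  have inj2: "inj (\<lambda>i. x - ev i)"
    by (rule injI) (auto simp: vec_eq_iff ev_def split: if_splits)
  have disj: "range (\<lambda>i. x + ev i) \<inter> range (\<lambda>i. x - ev i) = {}"
  proof (rule ccontr)
    assume "\<not> ?thesis"
    then obtain i j where "x + ev i = x - ev j" by auto
    then have "(x + ev i) $ i = (x - ev j) $ i" by simp
    then show False by (auto simp: ev_def split: if_splits)
  qed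
  show ?thesis unfolding nbrs_eq
    by (simp add: sum.union_disjoint[OF _ _ disj] sum.reindex[OF inj1] sum.reindex[OF inj2] sum.distrib)
qed

lemma ssq_plus: "ssq (x + ev i) = ssq x + 2 * real_of_int (x $ i) + 1"
proof -
  have "ssq (x + ev i) = (\<Sum>j\<in>UNIV. (real_of_int (x $ j))^2 + (if j = i then 2 * real_of_int (x $ j) + 1 else 0))"
    unfolding ssq_def by (intro sum.cong) (auto simp: ev_def power2_eq_square algebra_simps)
  then show ?thesis by (simp add: sum.distrib ssq_def)
qed

lemma ssq_minus: "ssq (x - ev i) = ssq x - 2 * real_of_int (x $ i) + 1"
proof -
  have "ssq (x - ev i) = (\<Sum>j\<in>UNIV. (real_of_int (x $ j))^2 + (if j = i then 1 - 2 * real_of_int (x $ j) else 0))"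
    unfolding ssq_def by (intro sum.cong) (auto simp: ev_def power2_eq_square algebra_simps)
  then show ?thesis by (simp add: sum.distrib ssq_def)
qed

lemma ssq_nonneg: "ssq x \<ge> 0"
  unfolding ssq_def by (simp add: sum_nonneg)

lemma coord_le_ssq: "(real_of_int (x $ i))^2 \<le> ssq x"
  unfolding ssq_def
  by (rule member_le_sum[of i UNIV "\<lambda>j. (real_of_int (x $ j))^2"]) auto

lemma sum_aff:
  fixes f :: "'a::finite \<Rightarrow> real"
  shows "(\<Sum>i\<in>UNIV. e*(c + k*f i*p)) = e*(real CARD('a)*c + k*(\<Sum>i\<in>UNIV. f i)*p)"
proof -
  have "(\<Sum>i\<in>UNIV. e*(c + k*f i*p)) = (\<Sum>i\<in>UNIV. e*c + (e*k*p)*f i)"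
    by (intro sum.cong) (auto simp: algebra_simps)
  also have "\<dots> = real CARD('a) * (e*c) + (e*k*p) * (\<Sum>i\<in>UNIV. f i)"
    by (simp add: sum.distrib sum_distrib_left)
  finally show ?thesis by (simp add: algebra_simps)
qed

theorem theorem7p5:
  fixes \<alpha> q :: real
  assumes "CARD('d::finite) \<ge> 3"
    and "\<alpha> < 2"
    and "q > (real CARD('d) - \<alpha>) / (real CARD('d) - 2)"
  shows "\<exists>u :: int ^ 'd \<Rightarrow> real. (\<forall>x. u x > 0) \<and>
           (\<forall>x. lattice_laplacian u x + (1 + lattice_norm x) powr (- \<alpha>) * (u x) powr q \<le> 0)"
proof -
  define d where "d = real CARD('d)"
  have d3: "d \<ge> 3" using assms(1) by (simp add: d_def)
  have "q * (d - 2) > d - \<alpha>" using assms(3) d3 by (simp add: d_def pos_divide_less_eq)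
  then have qd: "(q - 1) * (d - 2) > 2 - \<alpha>" by (simp add: algebra_simps)
  have q1: "q > 1"
  proof (rule ccontr)
    assume "\<not> q > 1"
    then have "(q - 1) * (d - 2) \<le> 0" using d3 by (intro mult_nonpos_nonneg) auto
    with qd assms(2) show False by linarith
  qed
  define L where "L = (2 - \<alpha>) / (2 * (q - 1))"
  define U where "U = (d - 2) / 2"
  have LU: "L < U"
  proof -
    have e: "(d - 2) * (2 * q - 2) = 2 * ((q-1)*(d-2))" by (simp add: algebra_simps)
    show ?thesis using qd q1 by (simp add: L_def U_def divide_simps e)
  qed
  have L0: "L > 0" using q1 assms(2) by (simp add: L_def)
  define \<gamma> where "\<gamma> = (L + U) / 2"
  have g0: "\<gamma> > 0" and gU: "\<gamma> < U" and gL: "\<gamma> \<ge> L" using LU L0 by (auto simp: \<gamma>_def)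
  have g2: "2 * \<gamma> + 2 < d" using gU by (simp add: U_def)
  have gq: "\<gamma> * (q - 1) \<ge> 1 - \<alpha> / 2"
  proof -
    have "L * (q - 1) = 1 - \<alpha>/2" using q1 by (simp add: L_def field_simps)
    moreover have "L * (q - 1) \<le> \<gamma> * (q - 1)" using gL q1 by (intro mult_right_mono) auto
    ultimately show ?thesis by simp
  qed
  define K where "K = (1 + d / (2 * (\<gamma> + 1))) / 2"
  have "d / (2 * (\<gamma> + 1)) > 1" using g2 g0 by (simp add: field_simps)
  then have K1: "K > 1" by (simp add: K_def)
  have K4: "4 * K * (\<gamma> + 1) = 2 * (\<gamma> + 1) + d" using g0 by (simp add: K_def field_simps)
  define M where "M = \<gamma> * (d - 2 * \<gamma> - 2)"
  have M0: "M > 0" using g0 g2 by (simp add: M_def)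
  have MK: "2 * d * \<gamma> - 4 * K * \<gamma> * (\<gamma> + 1) = M"
  proof -
    have "4 * K * \<gamma> * (\<gamma> + 1) = \<gamma> * (4 * K * (\<gamma> + 1))" by (simp add: algebra_simps)
    also have "\<dots> = \<gamma> * (2 * (\<gamma> + 1) + d)" using K4 by simp
    finally show ?thesis by (simp add: M_def algebra_simps)
  qed
  obtain \<rho> where \<rho>0: "\<rho> > 0" and \<rho>h: "\<rho> \<le> 1/2"
    and P: "\<forall>r. r^2 < \<rho>^2 \<longrightarrow> (1+r) powr (-\<gamma>) + (1-r) powr (-\<gamma>) - 2 \<le> K*\<gamma>*(\<gamma>+1)*r^2"
    using phi_bound[OF g0 K1] by blast
  define C0 where "C0 = 2 + 1 / \<rho>^2"
  have C02: "C0 \<ge> 2" by (simp add: C0_def)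
  have C0\<rho>: "\<rho>^2 * C0 \<ge> 1" using \<rho>0 by (simp add: C0_def algebra_simps)
  define K1 where "K1 = (C0 + 1) powr (\<alpha>/2) + 2 powr (-\<alpha>/2)"
  have K1p: "K1 > 0"
  proof -
    have "(C0+1) powr (\<alpha>/2) > 0" using C02 by simp
    moreover have "(2::real) powr (-\<alpha>/2) > 0" by simp
    ultimately show ?thesis unfolding K1_def by linarith
  qed
  define B where "B = M / (2 * d * K1 * 2 powr (\<gamma> * q))"
  have B0: "B > 0" using M0 d3 K1p by (simp add: B_def)
  define \<epsilon> where "\<epsilon> = B powr (1 / (q - 1))"
  have e0: "\<epsilon> > 0" using B0 by (simp add: \<epsilon>_def)
  have eq: "\<epsilon> powr q = \<epsilon> * B"
  proof -
    have "\<epsilon> powr (q - 1) = B" using B0 q1 by (simp add: \<epsilon>_def powr_powr)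
    moreover have "\<epsilon> powr q = \<epsilon> powr 1 * \<epsilon> powr (q - 1)" using powr_add[of \<epsilon> 1 "q-1"] by simp
    moreover have "\<epsilon> powr 1 = \<epsilon>" using e0 by simp
    ultimately show ?thesis by simp
  qed
  define h where "h = (\<lambda>x::int^'d. (C0 + ssq x) powr (-\<gamma>))"
  define u where "u = (\<lambda>x. \<epsilon> * h x)"
  show ?thesis
  proof (intro exI[of _ u] conjI allI)
    fix x :: "int^'d"
    show "u x > 0" using e0 C02 ssq_nonneg[of x] by (simp add: u_def h_def)
  next
    fix x :: "int^'d"
    define S where "S = ssq x"
    have S0: "S \<ge> 0" using ssq_nonneg by (simp add: S_def)
    define a where "a = C0 + S + 1"
    have a3: "a \<ge> 3" using C02 S0 by (simp add: a_def)
    define t where "t = (\<lambda>i. 2 * real_of_int (x $ i))"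
    have up: "u (x + ev i) = \<epsilon> * (a + t i) powr (-\<gamma>)" for i
      by (simp add: u_def h_def ssq_plus a_def t_def S_def algebra_simps)
    have um: "u (x - ev i) = \<epsilon> * (a - t i) powr (-\<gamma>)" for i
      by (simp add: u_def h_def ssq_minus a_def t_def S_def algebra_simps)
    have u0: "u x = \<epsilon> * (a - 1) powr (-\<gamma>)"
      by (simp add: u_def h_def a_def S_def)
    have tS: "t i ^ 2 \<le> 4 * S" for i
      using coord_le_ssq[of x i] by (simp add: t_def S_def power_mult_distrib)
    have a2: "a^2 > 4 * C0 * S"
    proof -
      have "(C0 + S)^2 - 4 * C0 * S = (C0 - S)^2" by (simp add: power2_eq_square algebra_simps)
      then have "(C0 + S)^2 \<ge> 4 * C0 * S" using zero_le_power2[of "C0 - S"] by linarith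
      moreover have "a^2 > (C0 + S)^2" using C02 S0
        by (simp add: a_def power_strict_mono)
      ultimately show ?thesis by linarith
    qed
    have tr: "t i ^ 2 < \<rho>^2 * a^2" for i
    proof -
      have "\<rho>^2 * a^2 > \<rho>^2 * (4 * C0 * S)" using a2 \<rho>0 by simp
      moreover have "\<rho>^2 * (4 * C0 * S) \<ge> 4 * S" using C0\<rho> S0
        by (metis mult.assoc mult.left_commute mult_le_cancel_right1 zero_le_mult_iff zero_le_numeral
            mult_right_mono mult_1)
      ultimately show ?thesis using tS[of i] by linarith
    qed
    have each: "u (x + ev i) + u (x - ev i) - 2 * u x \<le>
        \<epsilon> * (- 2 * \<gamma> * a powr (-\<gamma>-1) + K*\<gamma>*(\<gamma>+1) * t i ^ 2 * a powr (-\<gamma>-2))" for i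
    proof -
      have s1: "(a + t i) powr (-\<gamma>) + (a - t i) powr (-\<gamma>) - 2 * a powr (-\<gamma>) \<le> K*\<gamma>*(\<gamma>+1)*t i^2 * a powr (-\<gamma>-2)"
        using step_bound[OF g0 \<rho>0 \<rho>h P, of a "t i"] a3 tr[of i] by simp
      have s2: "a powr (-\<gamma>) + \<gamma> * a powr (-\<gamma>-1) \<le> (a - 1) powr (-\<gamma>)"
        using convex_bound[OF g0, of a] a3 by simp
      have "(a + t i) powr (-\<gamma>) + (a - t i) powr (-\<gamma>) - 2 * (a - 1) powr (-\<gamma>) \<le>
          - 2 * \<gamma> * a powr (-\<gamma>-1) + K*\<gamma>*(\<gamma>+1) * t i ^ 2 * a powr (-\<gamma>-2)"
        using s1 s2 by linarith
      then have "\<epsilon> * ((a + t i) powr (-\<gamma>) + (a - t i) powr (-\<gamma>) - 2 * (a - 1) powr (-\<gamma>)) \<le>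
          \<epsilon> * (- 2 * \<gamma> * a powr (-\<gamma>-1) + K*\<gamma>*(\<gamma>+1) * t i ^ 2 * a powr (-\<gamma>-2))"
        using e0 by (intro mult_left_mono) auto
      moreover have "u (x + ev i) + u (x - ev i) - 2 * u x =
          \<epsilon> * ((a + t i) powr (-\<gamma>) + (a - t i) powr (-\<gamma>) - 2 * (a - 1) powr (-\<gamma>))"
        unfolding up um u0 by (simp add: algebra_simps)
      ultimately show ?thesis by simp
    qed
    have sumt: "(\<Sum>i\<in>UNIV. t i ^ 2) = 4 * S"
      by (simp add: t_def S_def ssq_def power_mult_distrib sum_distrib_left)
    have Sa: "S * a powr (-\<gamma>-2) \<le> a powr (-\<gamma>-1)"
    proof -
      have "S * a powr (-\<gamma>-2) \<le> a * a powr (-\<gamma>-2)" using S0 a3 C02 by (intro mult_right_mono) (auto simp: a_def)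
      also have "a * a powr (-\<gamma>-2) = a powr (-\<gamma>-1)"
      proof -
        have e: "-\<gamma>-1 = 1 + (-\<gamma>-2)" by simp
        have "a powr (-\<gamma>-1) = a powr 1 * a powr (-\<gamma>-2)" unfolding e by (rule powr_add)
        then show ?thesis using a3 by simp
      qed
      finally show ?thesis .
    qed
    have lap_sum: "(\<Sum>y\<in>lattice_nbrs x. u y - u x) \<le> - \<epsilon> * M * a powr (-\<gamma>-1)"
    proof -
      have "(\<Sum>y\<in>lattice_nbrs x. u y - u x) = (\<Sum>i\<in>UNIV. u (x + ev i) + u (x - ev i) - 2 * u x)"
        by (simp add: sum_nbrs algebra_simps)
      also have "\<dots> \<le> (\<Sum>i\<in>UNIV. \<epsilon> * (- 2 * \<gamma> * a powr (-\<gamma>-1) + K*\<gamma>*(\<gamma>+1) * t i ^ 2 * a powr (-\<gamma>-2)))"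
        by (intro sum_mono each)
      also have "\<dots> = \<epsilon> * (- 2 * d * \<gamma> * a powr (-\<gamma>-1) + K*\<gamma>*(\<gamma>+1) * (\<Sum>i\<in>UNIV. t i ^ 2) * a powr (-\<gamma>-2))"
        using sum_aff[of \<epsilon> "- 2 * \<gamma> * a powr (-\<gamma>-1)" "K*\<gamma>*(\<gamma>+1)" "\<lambda>i. t i ^ 2" "a powr (-\<gamma>-2)"]
        by (simp add: d_def)
      also have "\<dots> = \<epsilon> * (- 2 * d * \<gamma> * a powr (-\<gamma>-1) + 4*K*\<gamma>*(\<gamma>+1) * (S * a powr (-\<gamma>-2)))"
        by (simp add: sumt algebra_simps)
      also have "\<dots> \<le> \<epsilon> * (- 2 * d * \<gamma> * a powr (-\<gamma>-1) + 4*K*\<gamma>*(\<gamma>+1) * a powr (-\<gamma>-1))"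
        using Sa e0 g0 K1 by (intro mult_left_mono add_left_mono) auto
      also have "\<dots> = \<epsilon> * (- (2 * d * \<gamma> - 4 * K * \<gamma> * (\<gamma> + 1)) * a powr (-\<gamma>-1))"
        by (simp add: algebra_simps)
      also have "\<dots> = - \<epsilon> * M * a powr (-\<gamma>-1)"
        unfolding MK by simp
      finally show ?thesis .
    qed
    have lap: "lattice_laplacian u x \<le> - \<epsilon> * (M / (2*d)) * a powr (-\<gamma>-1)"
    proof -
      have "lattice_laplacian u x = (1 / (2*d)) * (\<Sum>y\<in>lattice_nbrs x. u y - u x)"
        by (simp add: lattice_laplacian_def d_def)
      also have "\<dots> \<le> (1 / (2*d)) * (- \<epsilon> * M * a powr (-\<gamma>-1))"
        using lap_sum d3 by (intro mult_left_mono) auto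
      finally show ?thesis by simp
    qed
    define n where "n = lattice_norm x"
    have n0: "n \<ge> 0" and nS: "n^2 = S"
      using S0 by (auto simp: n_def lattice_norm_def S_def ssq_def)
    have n1: "1 + S \<le> (1+n)^2" using n0 nS by (simp add: power2_eq_square algebra_simps)
    have n2: "(1+n)^2 \<le> 2 * (1 + S)"
    proof -
      have "(1+n)^2 = 2 * (1 + S) - (1 - n)^2" using nS[symmetric] by (simp add: power2_eq_square algebra_simps)
      then show ?thesis using zero_le_power2[of "1 - n"] by linarith
    qed
    have pos1: "(1 + n) powr (-\<alpha>) = ((1+n)^2) powr (-\<alpha>/2)"
    proof -
      have "((1+n) powr 2) powr (-\<alpha>/2) = (1+n) powr (2*(-\<alpha>/2))" by (rule powr_powr)
      moreover have "(1+n) powr 2 = (1+n)^2" using n0 by simp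
      ultimately show ?thesis by simp
    qed
    have norm_bd: "(1 + n) powr (-\<alpha>) \<le> K1 * a powr (-\<alpha>/2)"
    proof (cases "\<alpha> \<ge> 0")
      case True
      have "a / (C0 + 1) \<le> 1 + S" using C02 S0
        by (simp add: a_def divide_le_eq algebra_simps mult_left_mono)
      then have le: "a / (C0+1) \<le> (1+n)^2" using n1 by linarith
      have "((1+n)^2) powr (-\<alpha>/2) \<le> (a / (C0+1)) powr (-\<alpha>/2)"
        using le True a3 C02 by (intro powr_mono2') auto
      also have "\<dots> = (C0 + 1) powr (\<alpha>/2) * a powr (-\<alpha>/2)"
        using a3 C02 by (simp add: powr_divide powr_minus divide_simps)
      also have "\<dots> \<le> K1 * a powr (-\<alpha>/2)"
        by (intro mult_right_mono) (auto simp: K1_def)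
      finally show ?thesis using pos1 by simp
    next
      case False
      have le: "(1+n)^2 \<le> 2 * a" using n2 C02 by (simp add: a_def)
      have "((1+n)^2) powr (-\<alpha>/2) \<le> (2 * a) powr (-\<alpha>/2)"
        using le False n0 by (intro powr_mono2) auto
      also have "\<dots> = 2 powr (-\<alpha>/2) * a powr (-\<alpha>/2)"
        using a3 by (simp add: powr_mult)
      also have "\<dots> \<le> K1 * a powr (-\<alpha>/2)"
        by (intro mult_right_mono) (auto simp: K1_def)
      finally show ?thesis using pos1 by simp
    qed
    have upow: "(u x) powr q \<le> \<epsilon> powr q * (2 powr (\<gamma> * q) * a powr (- \<gamma> * q))"
    proof -
      have "(u x) powr q = \<epsilon> powr q * (a - 1) powr (- \<gamma> * q)"
        using e0 a3 by (simp add: u0 powr_mult powr_powr)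
      also have "(a - 1) powr (- \<gamma> * q) \<le> (a / 2) powr (- \<gamma> * q)"
        using a3 g0 q1 by (intro powr_mono2') auto
      also have "(a / 2) powr (- \<gamma> * q) = 2 powr (\<gamma> * q) * a powr (- \<gamma> * q)"
        using a3 by (simp add: powr_divide powr_minus divide_simps)
      finally show ?thesis using e0 by (simp add: mult_left_mono)
    qed
    have expo: "a powr (-\<alpha>/2) * a powr (- \<gamma> * q) \<le> a powr (-\<gamma>-1)"
    proof -
      have "a powr (-\<alpha>/2) * a powr (- \<gamma> * q) = a powr (-\<alpha>/2 - \<gamma> * q)"
        by (simp add: powr_add[symmetric])
      also have "\<dots> \<le> a powr (-\<gamma>-1)"
        using a3 gq by (intro powr_mono) (auto simp: algebra_simps)
      finally show ?thesis .
    qed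
    have nonlin: "(1 + n) powr (-\<alpha>) * (u x) powr q \<le> \<epsilon> * (M / (2*d)) * a powr (-\<gamma>-1)"
    proof -
      have "(1 + n) powr (-\<alpha>) * (u x) powr q \<le> (K1 * a powr (-\<alpha>/2)) * (\<epsilon> powr q * (2 powr (\<gamma> * q) * a powr (- \<gamma> * q)))"
        using norm_bd upow K1p by (intro mult_mono) auto
      also have "\<dots> = K1 * 2 powr (\<gamma> * q) * \<epsilon> powr q * (a powr (-\<alpha>/2) * a powr (- \<gamma> * q))"
        by (simp add: algebra_simps)
      also have "\<dots> \<le> K1 * 2 powr (\<gamma> * q) * \<epsilon> powr q * a powr (-\<gamma>-1)"
        using expo K1p by (intro mult_left_mono) auto
      also have "K1 * 2 powr (\<gamma> * q) * \<epsilon> powr q = \<epsilon> * (M / (2*d))"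
        using K1p d3 by (simp add: eq B_def field_simps)
      finally show ?thesis .
    qed
    show "lattice_laplacian u x + (1 + lattice_norm x) powr (- \<alpha>) * (u x) powr q \<le> 0"
      using lap nonlin by (simp add: n_def)
  qed
qed

end
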